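(* Let $p,d\in\mathbb{N}$ and let $G$ be a finite graph such that $\mathrm{Sep}(G,p)\le d$ and $K_{p,p}$ is not a minor of $G$. Then for every $k\ge p$, $$\mathrm{Sep}(G,k)\le d+k^2+k\,2^k\max\{p,d\}.$$
   Context: Graphs are finite, simple, undirected. $\mathrm{Sep}(G,k)$ is the maximum, over all vertex sets $S$ with $|S|\le k$, of the number of connected components of $G-S$. *)

theory Defs
  imports Main
begin

definition simple_graph :: "'a set \<Rightarrow> 'a set set \<Rightarrow> bool" where
  "simple_graph V E \<longleftrightarrow> finite V \<and> (\<forall>e\<in>E. \<exists>u v. e = {u, v} \<and> u \<noteq> v \<and> u \<in> V \<and> v \<in> V)"

definition adj_in :: "'a set set \<Rightarrow> 'a set \<Rightarrow> ('a \<times> 'a) set" where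
  "adj_in E X = {(u, v). u \<in> X \<and> v \<in> X \<and> {u, v} \<in> E}"

definition components :: "'a set set \<Rightarrow> 'a set \<Rightarrow> 'a set set" where
  "components E X = {{v \<in> X. (u, v) \<in> (adj_in E X)\<^sup>*} | u. u \<in> X}"

definition Sep :: "'a set \<Rightarrow> 'a set set \<Rightarrow> nat \<Rightarrow> nat" where
  "Sep V E k = Max {card (components E (V - S)) | S. S \<subseteq> V \<and> card S \<le> k}"

definition connected_set :: "'a set set \<Rightarrow> 'a set \<Rightarrow> bool" where
  "connected_set E X \<longleftrightarrow> X \<noteq> {} \<and> (\<forall>u\<in>X. \<forall>v\<in>X. (u, v) \<in> (adj_in E X)\<^sup>*)"

definition is_minor :: "'b set \<Rightarrow> 'b set set \<Rightarrow> 'a set \<Rightarrow> 'a set set \<Rightarrow> bool" where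
  "is_minor VH EH V E \<longleftrightarrow>
     (\<exists>\<phi> :: 'b \<Rightarrow> 'a set.
        (\<forall>x\<in>VH. \<phi> x \<subseteq> V \<and> connected_set E (\<phi> x)) \<and>
        (\<forall>x\<in>VH. \<forall>y\<in>VH. x \<noteq> y \<longrightarrow> \<phi> x \<inter> \<phi> y = {}) \<and>
        (\<forall>x y. {x, y} \<in> EH \<longrightarrow> (\<exists>u\<in>\<phi> x. \<exists>v\<in>\<phi> y. {u, v} \<in> E)))"

definition Kpp_V :: "nat \<Rightarrow> (nat + nat) set" where
  "Kpp_V p = Inl ` {..<p} \<union> Inr ` {..<p}"

definition Kpp_E :: "nat \<Rightarrow> (nat + nat) set set" where
  "Kpp_E p = {{Inl i, Inr j} | i j. i < p \<and> j < p}"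

end

theory Submission
  imports Defs
begin

lemma adj_in_sym: "(adj_in E X)\<inverse> = adj_in E X"
  by (auto simp: adj_in_def insert_commute)

lemma rtr_sym: "(u, v) \<in> (adj_in E X)\<^sup>* \<Longrightarrow> (v, u) \<in> (adj_in E X)\<^sup>*"
proof -
  assume "(u, v) \<in> (adj_in E X)\<^sup>*"
  hence "(v, u) \<in> ((adj_in E X)\<inverse>)\<^sup>*" by (simp add: rtrancl_converse)
  thus ?thesis by (simp add: adj_in_sym)
qed

lemma comp_class:
  assumes "C \<in> components E X" "w \<in> C"
  shows "C = {v \<in> X. (w, v) \<in> (adj_in E X)\<^sup>*}"
proof -
  from assms obtain u where u: "u \<in> X" "C = {v \<in> X. (u, v) \<in> (adj_in E X)\<^sup>*}"
    by (auto simp: components_def)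
  with assms have uw: "(u, w) \<in> (adj_in E X)\<^sup>*" by auto
  hence wu: "(w, u) \<in> (adj_in E X)\<^sup>*" by (rule rtr_sym)
  show ?thesis using u uw wu by (auto intro: rtrancl_trans)
qed

lemma comp_disj:
  assumes "C1 \<in> components E X" "C2 \<in> components E X" "C1 \<noteq> C2"
  shows "C1 \<inter> C2 = {}"
proof (rule ccontr)
  assume "C1 \<inter> C2 \<noteq> {}"
  then obtain w where "w \<in> C1" "w \<in> C2" by auto
  with comp_class[OF assms(1)] comp_class[OF assms(2)] assms(3) show False by auto
qed

lemma comp_sub: "C \<in> components E X \<Longrightarrow> C \<subseteq> X"
  by (auto simp: components_def)

lemma comp_conn:
  assumes "C \<in> components E X"
  shows "connected_set E C"
proof -
  from assms obtain u where u: "u \<in> X" "C = {v \<in> X. (u, v) \<in> (adj_in E X)\<^sup>*}"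
    by (auto simp: components_def)
  have key: "(u, w) \<in> (adj_in E C)\<^sup>*" if "(u, w) \<in> (adj_in E X)\<^sup>*" for w
    using that
  proof (induction rule: rtrancl_induct)
    case base thus ?case by simp
  next
    case (step y z)
    have "y \<in> C" "z \<in> C" using step.hyps u by (auto simp: adj_in_def intro: rtrancl_into_rtrancl)
    hence "(y, z) \<in> adj_in E C" using step.hyps(2) by (auto simp: adj_in_def)
    with step.IH show ?case by (rule rtrancl_into_rtrancl)
  qed
  have "u \<in> C" using u by auto
  moreover have "(v, w) \<in> (adj_in E C)\<^sup>*" if "v \<in> C" "w \<in> C" for v w
  proof -
    have "(u, v) \<in> (adj_in E C)\<^sup>*" "(u, w) \<in> (adj_in E C)\<^sup>*" using key that u by auto
    thus ?thesis by (meson rtr_sym rtrancl_trans)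
  qed
  ultimately show ?thesis by (auto simp: connected_set_def)
qed

definition nb :: "'a set set \<Rightarrow> 'a set \<Rightarrow> 'a set \<Rightarrow> 'a set" where
  "nb E S C = {s \<in> S. \<exists>c\<in>C. {s, c} \<in> E}"

lemma comp_smaller:
  assumes "C \<in> components E (V - S)" "T \<subseteq> S" "nb E S C \<subseteq> T"
  shows "C \<in> components E (V - T)"
proof -
  from assms obtain u where u: "u \<in> V - S" "C = {v \<in> V - S. (u, v) \<in> (adj_in E (V - S))\<^sup>*}"
    by (auto simp: components_def)
  have mn: "adj_in E (V - S) \<subseteq> adj_in E (V - T)" using assms(2) by (auto simp: adj_in_def)
  have bk: "z \<in> C" if "(u, z) \<in> (adj_in E (V - T))\<^sup>*" for z
    using that
  proof (induction rule: rtrancl_induct)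
    case base thus ?case using u by simp
  next
    case (step y z)
    have z: "z \<in> V - T" "{y, z} \<in> E" using step.hyps(2) by (auto simp: adj_in_def)
    have "z \<notin> S"
    proof
      assume "z \<in> S"
      hence "z \<in> nb E S C" using step.IH z(2) by (auto simp: nb_def insert_commute)
      thus False using assms(3) z(1) by auto
    qed
    hence "(y, z) \<in> adj_in E (V - S)" using z step.IH u by (auto simp: adj_in_def)
    thus ?case using step.IH u z \<open>z \<notin> S\<close> by (auto intro: rtrancl_into_rtrancl)
  qed
  have "C = {v \<in> V - T. (u, v) \<in> (adj_in E (V - T))\<^sup>*}"
  proof
    show "C \<subseteq> {v \<in> V - T. (u, v) \<in> (adj_in E (V - T))\<^sup>*}"
      using u assms(2) rtrancl_mono[OF mn] by auto
    show "{v \<in> V - T. (u, v) \<in> (adj_in E (V - T))\<^sup>*} \<subseteq> C" using bk by auto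
  qed
  moreover have "u \<in> V - T" using u assms(2) by auto
  ultimately show ?thesis by (auto simp: components_def)
qed

lemma finite_comps: "finite X \<Longrightarrow> finite (components E X)"
  by (rule finite_subset[of _ "Pow X"]) (auto simp: components_def)

lemma Sep_fin: "finite V \<Longrightarrow> finite {card (components E (V - S)) | S. S \<subseteq> V \<and> card S \<le> k}"
  by (rule finite_image_set) (rule finite_subset[of _ "Pow V"], auto)

lemma Sep_ge:
  assumes "finite V" "T \<subseteq> V" "card T \<le> k"
  shows "card (components E (V - T)) \<le> Sep V E k"
  unfolding Sep_def using assms by (intro Max_ge[OF Sep_fin]) auto


lemma fiber_big:
  assumes fin: "finite V" and nm: "\<not> is_minor (Kpp_V p) (Kpp_E p) V E"
    and SV: "S \<subseteq> V" and TS: "T \<subseteq> S" and cT: "p \<le> card T"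
  shows "card {C \<in> components E (V - S). nb E S C = T} < p"
proof (rule ccontr)
  let ?F = "{C \<in> components E (V - S). nb E S C = T}"
  assume "\<not> card ?F < p"
  then obtain F where F: "F \<subseteq> ?F" "card F = p" "finite F"
    by (meson not_less obtain_subset_with_card_n)
  have finT: "finite T" using fin SV TS finite_subset by blast
  obtain T0 where T0: "T0 \<subseteq> T" "card T0 = p" "finite T0"
    using cT by (meson obtain_subset_with_card_n)
  obtain f where f: "bij_betw f {..<p} T0" using finite_same_card_bij[of "{..<p}" T0] T0 by auto
  obtain g where g: "bij_betw g {..<p} F" using finite_same_card_bij[of "{..<p}" F] F by auto
  define \<phi> where "\<phi> = case_sum (\<lambda>i. {f i}) (\<lambda>j. g j)"
  have fi: "f i \<in> T0" if "i < p" for i using f that by (auto simp: bij_betw_def)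
  have gj: "g j \<in> F" if "j < p" for j using g that by (auto simp: bij_betw_def)
  have gc: "g j \<in> components E (V - S)" "nb E S (g j) = T" if "j < p" for j
    using gj[OF that] F(1) by auto
  have A: "\<phi> x \<subseteq> V \<and> connected_set E (\<phi> x)" if "x \<in> Kpp_V p" for x
  proof -
    from that consider i where "i < p" "x = Inl i" | j where "j < p" "x = Inr j"
      by (auto simp: Kpp_V_def)
    then show "\<phi> x \<subseteq> V \<and> connected_set E (\<phi> x)"
    proof cases
      case 1
      then show ?thesis using fi[OF 1(1)] T0 TS SV
        by (auto simp: \<phi>_def connected_set_def adj_in_def)
    next
      case 2
      then show ?thesis using comp_sub[OF gc(1)[OF 2(1)]] comp_conn[OF gc(1)[OF 2(1)]]
        by (auto simp: \<phi>_def)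
    qed
  qed
  have B: "\<phi> x \<inter> \<phi> y = {}" if x: "x \<in> Kpp_V p" and y: "y \<in> Kpp_V p" and xy: "x \<noteq> y" for x y
  proof -
    from x consider i where "i < p" "x = Inl i" | j where "j < p" "x = Inr j"
      by (auto simp: Kpp_V_def)
    then show "\<phi> x \<inter> \<phi> y = {}"
    proof cases
      case 1
      from y consider i' where "i' < p" "y = Inl i'" | j where "j < p" "y = Inr j"
        by (auto simp: Kpp_V_def)
      then show ?thesis
      proof cases
        case a: 1
        have "f i \<noteq> f i'" using f 1 a xy by (auto simp: bij_betw_def inj_on_def)
        then show ?thesis using 1 a by (auto simp: \<phi>_def)
      next
        case a: 2
        show ?thesis using 1 a comp_sub[OF gc(1)[OF a(1)]] fi[OF 1(1)] T0 TS
          by (auto simp: \<phi>_def)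
      qed
    next
      case 2
      from y consider i' where "i' < p" "y = Inl i'" | j' where "j' < p" "y = Inr j'"
        by (auto simp: Kpp_V_def)
      then show ?thesis
      proof cases
        case a: 1
        show ?thesis using 2 a comp_sub[OF gc(1)[OF 2(1)]] fi[OF a(1)] T0 TS
          by (auto simp: \<phi>_def)
      next
        case a: 2
        have "g j \<noteq> g j'" using g 2 a xy by (auto simp: bij_betw_def inj_on_def)
        then have "g j \<inter> g j' = {}" using comp_disj[OF gc(1)[OF 2(1)] gc(1)[OF a(1)]] by simp
        then show ?thesis using 2 a by (simp add: \<phi>_def)
      qed
    qed
  qed
  have C: "\<exists>u\<in>\<phi> x. \<exists>v\<in>\<phi> y. {u, v} \<in> E" if "{x, y} \<in> Kpp_E p" for x y
  proof -
    from that obtain i j where ij: "i < p" "j < p" "{x, y} = {Inl i, Inr j}"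
      by (auto simp: Kpp_E_def)
    have "f i \<in> nb E S (g j)" using gc(2)[OF ij(2)] fi[OF ij(1)] T0 by auto
    then obtain c where c: "c \<in> g j" "{f i, c} \<in> E" by (auto simp: nb_def)
    from ij(3) have "(x = Inl i \<and> y = Inr j) \<or> (x = Inr j \<and> y = Inl i)"
      by (auto simp: doubleton_eq_iff)
    then show "\<exists>u\<in>\<phi> x. \<exists>v\<in>\<phi> y. {u, v} \<in> E"
      using c by (auto simp: \<phi>_def insert_commute)
  qed
  have "is_minor (Kpp_V p) (Kpp_E p) V E"
    unfolding is_minor_def using A B C by blast
  with nm show False by simp
qed

lemma fiber_small:
  assumes fin: "finite V" and sep: "Sep V E p \<le> d"
    and SV: "S \<subseteq> V" and TS: "T \<subseteq> S" and cT: "card T \<le> p"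
  shows "card {C \<in> components E (V - S). nb E S C = T} \<le> d"
proof -
  have "{C \<in> components E (V - S). nb E S C = T} \<subseteq> components E (V - T)"
    using comp_smaller[OF _ TS] by auto
  hence "card {C \<in> components E (V - S). nb E S C = T} \<le> card (components E (V - T))"
    by (intro card_mono finite_comps) (use fin in auto)
  also have "\<dots> \<le> Sep V E p" using Sep_ge[OF fin _ cT] SV TS by auto
  finally show ?thesis using sep by simp
qed

lemma comps_bound:
  assumes fin: "finite V" and sep: "Sep V E p \<le> d"
    and nm: "\<not> is_minor (Kpp_V p) (Kpp_E p) V E"
    and SV: "S \<subseteq> V" and cS: "card S \<le> k"
  shows "card (components E (V - S)) \<le> 2^k * max p d"
proof -
  have finS: "finite S" using fin SV finite_subset by blast
  have eq: "components E (V - S) = (\<Union>T\<in>Pow S. {C \<in> components E (V - S). nb E S C = T})"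
    by (auto simp: nb_def)
  have "card (\<Union>T\<in>Pow S. {C \<in> components E (V - S). nb E S C = T}) \<le> (\<Sum>T\<in>Pow S. card {C \<in> components E (V - S). nb E S C = T})"
    by (rule card_UN_le) (simp add: finS)
  hence "card (components E (V - S)) \<le> (\<Sum>T\<in>Pow S. card {C \<in> components E (V - S). nb E S C = T})"
    unfolding eq[symmetric] .
  also have "\<dots> \<le> (\<Sum>T\<in>Pow S. max p d)"
  proof (rule sum_mono)
    fix T assume "T \<in> Pow S"
    hence TS: "T \<subseteq> S" by auto
    show "card {C \<in> components E (V - S). nb E S C = T} \<le> max p d"
    proof (cases "card T \<le> p")
      case True
      then show ?thesis using fiber_small[OF fin sep SV TS] by simp
    next
      case False
      then show ?thesis using fiber_big[OF fin nm SV TS] by fastforce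
    qed
  qed
  also have "\<dots> = 2 ^ card S * max p d" using finS by (simp add: card_Pow)
  also have "\<dots> \<le> 2^k * max p d" using cS by simp
  finally show ?thesis .
qed

theorem proposition4p17:
  fixes V :: "'a set" and E :: "'a set set" and p d :: nat
  assumes "simple_graph V E"
    and "Sep V E p \<le> d"
    and "\<not> is_minor (Kpp_V p) (Kpp_E p) V E"
  shows "\<forall>k \<ge> p. Sep V E k \<le> d + k^2 + k * 2^k * max p d"
proof (intro allI impI)
  fix k assume kp: "p \<le> k"
  have fin: "finite V" using assms(1) by (simp add: simple_graph_def)
  have p1: "p \<ge> 1"
  proof (rule ccontr)
    assume "\<not> p \<ge> 1"
    hence "p = 0" by simp
    hence "is_minor (Kpp_V p) (Kpp_E p) V E"
      by (simp add: is_minor_def Kpp_V_def Kpp_E_def)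
    with assms(3) show False by simp
  qed
  have "Sep V E k \<le> 2^k * max p d"
    unfolding Sep_def
  proof (subst Max_le_iff)
    show "finite {card (components E (V - S)) |S. S \<subseteq> V \<and> card S \<le> k}"
      by (rule Sep_fin[OF fin])
    show "{card (components E (V - S)) |S. S \<subseteq> V \<and> card S \<le> k} \<noteq> {}" by auto
    show "\<forall>a\<in>{card (components E (V - S)) |S. S \<subseteq> V \<and> card S \<le> k}. a \<le> 2 ^ k * max p d"
      using comps_bound[OF fin assms(2) assms(3)] by auto
  qed
  also have "\<dots> \<le> k * 2^k * max p d" using kp p1 by simp
  also have "\<dots> \<le> d + k^2 + k * 2^k * max p d" by simp
  finally show "Sep V E k \<le> d + k^2 + k * 2^k * max p d" .
qed

end
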